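(* Let $p\ge1$, let $w(0),\ldots,w(p)$ be positive weights, and let $P_1,\ldots,P_m$ be $p\times p$ orthogonal projectors with ranks $k_1,\ldots,k_m$. For orthogonal projectors $Q_1,Q_2$ with ranks $r_1,r_2$ set $D_w^2(Q_1,Q_2)=\tfrac12\|w(r_1)Q_1-w(r_2)Q_2\|^2$ (Frobenius norm), let $\sigma_w^2(P)=\frac1m\sum_{i=1}^m D_w^2(P_i,P)$, and call an average orthogonal projector (AOP) $P_w$ any $p\times p$ orthogonal projector (of any rank $0,\ldots,p$) minimizing $\sigma_w^2$. Let $\bar P_w=\frac1m\sum_{i=1}^m w(k_i)P_i=\sum_{i=1}^p\lambda_iu_iu_i'$ be an eigendecomposition with $\lambda_1\ge\cdots\ge\lambda_p\ge0$ and orthonormal eigenvectors $u_1,\ldots,u_p$. Then the rank $k$ of the AOP $P_w$ maximizes \[ f_w(k)=w(k)\Big(\sum_{i=1}^k\lambda_i\Big)I(k>0)-\tfrac12 w^2(k)k,\qquad k=0,\ldots,p, \] and \[ P_w=I(k>0)\cdot\sum_{i=1}^k u_iu_i', \] where $u_1,\ldots,u_k$ are the eigenvectors corresponding to the eigenvalues $\lambda_1,\ldots,\lambda_k$.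
   Context: An orthogonal projector is a $p\times p$ real matrix $P$ with $P=P'=P^2$; the zero matrix is allowed and has rank $0$. $I(\cdot)$ denotes the indicator function. *)

theory Defs
  imports "HOL-Analysis.Analysis"
begin

definition orth_proj :: "real^'n^'n \<Rightarrow> bool" where
  "orth_proj P \<longleftrightarrow> transpose P = P \<and> P ** P = P"

definition frob_norm :: "real^'n^'n \<Rightarrow> real" where
  "frob_norm A = sqrt (\<Sum>i\<in>UNIV. \<Sum>j\<in>UNIV. (A $ i $ j)\<^sup>2)"

definition outer :: "real^'n \<Rightarrow> real^'n \<Rightarrow> real^'n^'n" where
  "outer x y = (\<chi> i j. x $ i * y $ j)"

definition Dw2 :: "(nat \<Rightarrow> real) \<Rightarrow> real^'n^'n \<Rightarrow> real^'n^'n \<Rightarrow> real" where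
  "Dw2 w Q1 Q2 = (1/2) * (frob_norm (w (rank Q1) *\<^sub>R Q1 - w (rank Q2) *\<^sub>R Q2))\<^sup>2"

definition sigma_w2 :: "(nat \<Rightarrow> real) \<Rightarrow> nat \<Rightarrow> (nat \<Rightarrow> real^'n^'n) \<Rightarrow> real^'n^'n \<Rightarrow> real" where
  "sigma_w2 w m Ps P = (1 / real m) * (\<Sum>i=1..m. Dw2 w (Ps i) P)"

definition is_AOP :: "(nat \<Rightarrow> real) \<Rightarrow> nat \<Rightarrow> (nat \<Rightarrow> real^'n^'n) \<Rightarrow> real^'n^'n \<Rightarrow> bool" where
  "is_AOP w m Ps Pw \<longleftrightarrow> orth_proj Pw \<and>
     (\<forall>Q. orth_proj Q \<longrightarrow> sigma_w2 w m Ps Pw \<le> sigma_w2 w m Ps Q)"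

definition Pbar_w :: "(nat \<Rightarrow> real) \<Rightarrow> nat \<Rightarrow> (nat \<Rightarrow> real^'n^'n) \<Rightarrow> real^'n^'n" where
  "Pbar_w w m Ps = (1 / real m) *\<^sub>R (\<Sum>i=1..m. w (rank (Ps i)) *\<^sub>R Ps i)"

definition f_w :: "(nat \<Rightarrow> real) \<Rightarrow> (nat \<Rightarrow> real) \<Rightarrow> nat \<Rightarrow> real" where
  "f_w w lam k = w k * (\<Sum>i=1..k. lam i) * (if k > 0 then 1 else 0) - (1/2) * (w k)\<^sup>2 * real k"

end

theory Submission
  imports Defs
begin


lemma outer_mulv: "outer x y *v z = (y \<bullet> z) *\<^sub>R x"
  by (simp add: outer_def matrix_vector_mult_def inner_vec_def vec_eq_iff sum_distrib_left mult.commute mult.left_commute)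

lemma sum_mulv: "(\<Sum>i\<in>I. f i) *v z = (\<Sum>i\<in>I. f i *v z)"
  by (induction I rule: infinite_finite_induct) (auto simp: matrix_vector_mult_add_rdistrib)

lemma scale_mulv: "(c *\<^sub>R (A::real^'n^'m)) *v z = c *\<^sub>R (A *v z)"
  by (simp add: matrix_vector_mult_def vec_eq_iff sum_distrib_left mult.assoc)

lemma op_sym: "orth_proj Q \<Longrightarrow> (Q *v x) \<bullet> y = x \<bullet> (Q *v y)"
  unfolding orth_proj_def
  by (metis dot_lmul_matrix transpose_transpose vector_transpose_matrix inner_commute)

lemma op_idem: "orth_proj Q \<Longrightarrow> Q *v (Q *v x) = Q *v x"
  unfolding orth_proj_def by (simp add: matrix_vector_mul_assoc)

lemma expansion:
  fixes b :: "'i \<Rightarrow> real^'n"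
  assumes "finite I" "\<And>i j. i \<in> I \<Longrightarrow> j \<in> I \<Longrightarrow> b i \<bullet> b j = (if i = j then 1 else 0)"
    and "x \<in> span (b ` I)"
  shows "x = (\<Sum>i\<in>I. (x \<bullet> b i) *\<^sub>R b i)"
proof -
  let ?y = "x - (\<Sum>i\<in>I. (x \<bullet> b i) *\<^sub>R b i)"
  have dj: "?y \<bullet> b j = 0" if "j \<in> I" for j
  proof -
    have "(\<Sum>i\<in>I. (x \<bullet> b i) *\<^sub>R b i) \<bullet> b j = (\<Sum>i\<in>I. (x \<bullet> b i) * (b i \<bullet> b j))"
      by (simp add: inner_sum_left)
    also have "\<dots> = (\<Sum>i\<in>I. if i = j then x \<bullet> b j else 0)"
      using assms(2) that by (intro sum.cong) auto
    also have "\<dots> = x \<bullet> b j" using assms(1) that by simp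
    finally show ?thesis by (simp add: inner_diff_left)
  qed
  have "?y \<in> span (b ` I)"
  proof (rule span_diff)
    show "x \<in> span (b ` I)" by (fact assms(3))
    show "(\<Sum>i\<in>I. (x \<bullet> b i) *\<^sub>R b i) \<in> span (b ` I)"
      by (intro span_sum span_scale span_base) auto
  qed
  hence "orthogonal ?y ?y"
    by (rule orthogonal_to_span) (use dj in \<open>auto simp: orthogonal_def\<close>)
  thus ?thesis by (simp add: orthogonal_def)
qed

lemma sym_mulv: "transpose Q = Q \<Longrightarrow> (Q *v x) \<bullet> y = x \<bullet> (Q *v (y::real^'n))"
  by (metis dot_lmul_matrix transpose_transpose vector_transpose_matrix inner_commute)

lemma diag_inner: "(Q::real^'n^'n) $ j $ j = (Q *v axis j 1) \<bullet> axis j 1"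
  by (simp add: inner_axis matrix_vector_mult_basis column_def)

lemma trace_gen:
  fixes Q :: "real^'n^'n" and b :: "'i \<Rightarrow> real^'n"
  assumes fin: "finite I" and orth: "\<And>i j. i \<in> I \<Longrightarrow> j \<in> I \<Longrightarrow> b i \<bullet> b j = (if i = j then 1 else 0)"
    and sym: "transpose Q = Q" and rng: "\<And>x. Q *v x \<in> span (b ` I)"
  shows "(\<Sum>j\<in>UNIV. Q $ j $ j) = (\<Sum>i\<in>I. b i \<bullet> (Q *v b i))"
proof -
  have "Q $ j $ j = (\<Sum>i\<in>I. (Q *v b i) $ j * b i $ j)" for j
  proof -
    have e: "Q *v axis j 1 = (\<Sum>i\<in>I. ((Q *v axis j 1) \<bullet> b i) *\<^sub>R b i)"
      by (rule expansion[OF fin orth rng])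
    have "Q $ j $ j = (\<Sum>i\<in>I. ((Q *v axis j 1) \<bullet> b i) *\<^sub>R b i) \<bullet> axis j 1"
      using e diag_inner by metis
    also have "\<dots> = (\<Sum>i\<in>I. ((Q *v axis j 1) \<bullet> b i) * (b i $ j))"
      by (simp add: inner_sum_left inner_axis)
    also have "\<dots> = (\<Sum>i\<in>I. (Q *v b i) $ j * b i $ j)"
    proof (intro sum.cong refl)
      fix i assume "i \<in> I"
      have "(Q *v axis j 1) \<bullet> b i = (Q *v b i) \<bullet> axis j 1"
        by (metis sym_mulv[OF sym] inner_commute)
      thus "((Q *v axis j 1) \<bullet> b i) * b i $ j = (Q *v b i) $ j * b i $ j"
        by (simp add: inner_axis)
    qed
    finally show ?thesis .
  qed
  hence "(\<Sum>j\<in>UNIV. Q $ j $ j) = (\<Sum>j\<in>UNIV. \<Sum>i\<in>I. (Q *v b i) $ j * b i $ j)" by simp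
  also have "\<dots> = (\<Sum>i\<in>I. \<Sum>j\<in>UNIV. (Q *v b i) $ j * b i $ j)" by (rule sum.swap)
  also have "\<dots> = (\<Sum>i\<in>I. b i \<bullet> (Q *v b i))"
    by (simp add: inner_vec_def mult.commute)
  finally show ?thesis .
qed

lemma trace_rank:
  fixes Q :: "real^'n^'n"
  assumes op: "orth_proj Q"
  shows "(\<Sum>j\<in>UNIV. Q $ j $ j) = real (rank Q)"
proof -
  have sub: "subspace (range (\<lambda>x. Q *v x))"
    by (intro subspace_UNIV linear_subspace_image) (simp add: matrix_vector_mul_linear)
  obtain B where B: "B \<subseteq> range (\<lambda>x. Q *v x)" "pairwise orthogonal B"
    "\<And>x. x \<in> B \<Longrightarrow> norm x = 1" "independent B" "card B = dim (range (\<lambda>x. Q *v x))"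
    "span B = range (\<lambda>x. Q *v x)"
    using orthonormal_basis_subspace[OF sub] by blast
  have fin: "finite B" using B(4) independent_imp_finite by blast
  have orth: "\<And>i j. i \<in> B \<Longrightarrow> j \<in> B \<Longrightarrow> id i \<bullet> id j = (if i = j then 1 else 0)"
    using B(2,3) by (auto simp: pairwise_def orthogonal_def norm_eq_1)
  have sym: "transpose Q = Q" using op by (simp add: orth_proj_def)
  have "(\<Sum>j\<in>UNIV. Q $ j $ j) = (\<Sum>i\<in>B. id i \<bullet> (Q *v id i))"
    by (rule trace_gen[OF fin orth sym]) (use B(6) in auto)
  also have "\<dots> = (\<Sum>i\<in>B. 1)"
  proof (intro sum.cong refl)
    fix x assume x: "x \<in> B"
    then obtain y where y: "x = Q *v y" using B(1) by auto
    have "Q *v x = x" using y op_idem[OF op] by simp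
    thus "id x \<bullet> (Q *v id x) = 1" using B(3)[OF x] by (simp add: norm_eq_1)
  qed
  also have "\<dots> = real (rank Q)" using B(5) by (simp add: rank_dim_range)
  finally show ?thesis .
qed

definition fip :: "real^'n^'n \<Rightarrow> real^'n^'n \<Rightarrow> real" where
  "fip A B = (\<Sum>i\<in>UNIV. \<Sum>j\<in>UNIV. A $ i $ j * B $ i $ j)"

lemma frob_sq: "(frob_norm A)\<^sup>2 = fip A A"
  unfolding frob_norm_def fip_def
  by (simp add: power2_eq_square[symmetric] sum_nonneg)

lemma frob_expand:
  "(frob_norm (a *\<^sub>R Q1 - b *\<^sub>R Q2))\<^sup>2 = a\<^sup>2 * fip Q1 Q1 - 2 * a * b * fip Q1 Q2 + b\<^sup>2 * fip Q2 Q2"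
  unfolding frob_sq fip_def
  by (simp add: algebra_simps power2_eq_square sum_distrib_left sum_subtractf sum.distrib)

lemma fip_comm: "fip A B = fip B A"
  by (simp add: fip_def mult.commute)

lemma fip_sum_left: "fip (\<Sum>k\<in>K. f k) B = (\<Sum>k\<in>K. fip (f k) B)"
  by (induction K rule: infinite_finite_induct) (auto simp: fip_def algebra_simps sum.distrib)

lemma fip_scale_left: "fip (c *\<^sub>R A) B = c * fip A B"
  by (simp add: fip_def sum_distrib_left mult.assoc)

lemma fip_outer: "fip (outer x x) Q = x \<bullet> (Q *v x)"
  unfolding fip_def outer_def inner_vec_def matrix_vector_mult_def
  by (simp add: sum_distrib_left) (simp add: mult_ac)

lemma fip_self_op:
  assumes op: "orth_proj Q" shows "fip Q Q = real (rank Q)"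
proof -
  have t: "transpose Q = Q" and id: "Q ** Q = Q" using op by (auto simp: orth_proj_def)
  have sy: "Q $ j $ i = Q $ i $ j" for i j
    using t by (metis transpose_def vec_lambda_beta)
  have "fip Q Q = (\<Sum>i\<in>UNIV. \<Sum>j\<in>UNIV. Q $ i $ j * Q $ j $ i)"
    unfolding fip_def using sy by simp
  also have "\<dots> = (\<Sum>i\<in>UNIV. (Q ** Q) $ i $ i)"
    by (simp add: matrix_matrix_mult_def)
  also have "\<dots> = (\<Sum>i\<in>UNIV. Q $ i $ i)" using id by simp
  also have "\<dots> = real (rank Q)" by (rule trace_rank[OF op])
  finally show ?thesis .
qed

lemma orthonormal_inj:
  assumes "\<And>i j. i \<in> I \<Longrightarrow> j \<in> I \<Longrightarrow> b i \<bullet> b j = (if i = j then (1::real) else 0)"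
  shows "inj_on b I"
proof (rule inj_onI)
  fix i j assume "i \<in> I" "j \<in> I" "b i = b j"
  thus "i = j" using assms[of i j] assms[of i i] by (auto split: if_splits)
qed

lemma orthonormal_indep:
  fixes b :: "'i \<Rightarrow> real^'n"
  assumes "\<And>i j. i \<in> I \<Longrightarrow> j \<in> I \<Longrightarrow> b i \<bullet> b j = (if i = j then 1 else 0)"
  shows "independent (b ` I)"
proof (rule pairwise_orthogonal_independent)
  show "pairwise orthogonal (b ` I)"
    using assms by (auto simp: pairwise_def orthogonal_def)
  show "0 \<notin> b ` I"
    using assms by (metis imageE inner_zero_left zero_neq_one)
qed

lemma orthonormal_span_UNIV:
  fixes b :: "'i \<Rightarrow> real^'n"
  assumes fin: "finite I" and card: "card I = CARD('n)"
    and orth: "\<And>i j. i \<in> I \<Longrightarrow> j \<in> I \<Longrightarrow> b i \<bullet> b j = (if i = j then 1 else 0)"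
  shows "span (b ` I) = UNIV"
proof -
  have ind: "independent (b ` I)" by (rule orthonormal_indep[OF orth])
  have c: "card (b ` I) = dim (UNIV :: (real^'n) set)"
    using card_image[OF orthonormal_inj[OF orth]] card by simp
  have "UNIV \<subseteq> span (b ` I)"
    using card_eq_dim[of "b ` I" UNIV] ind c fin by auto
  thus ?thesis by auto
qed

lemma op_quad:
  assumes op: "orth_proj Q"
  shows "x \<bullet> (Q *v x) = (Q *v x) \<bullet> (Q *v x)"
    and "x \<bullet> x - x \<bullet> (Q *v x) = (x - Q *v x) \<bullet> (x - Q *v x)"
proof -
  show 1: "x \<bullet> (Q *v x) = (Q *v x) \<bullet> (Q *v x)"
    using op_sym[OF op, of x "Q *v x"] op_idem[OF op, of x] by simp
  show "x \<bullet> x - x \<bullet> (Q *v x) = (x - Q *v x) \<bullet> (x - Q *v x)"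
    using 1 op_sym[OF op, of x x] by (simp add: inner_diff_left inner_diff_right inner_commute)
qed


lemma kf_identity:
  fixes lam c :: "nat \<Rightarrow> real"
  assumes "r \<le> N" "(\<Sum>i=1..N. c i) = real r"
  shows "(\<Sum>i=1..r. lam i) - (\<Sum>i=1..N. lam i * c i) =
         (\<Sum>i=1..r. (lam i - lam r) * (1 - c i)) + (\<Sum>i=r+1..N. (lam r - lam i) * c i)"
proof -
  have split: "(\<Sum>i=1..N. g i) = (\<Sum>i=1..r. g i) + (\<Sum>i=r+1..N. g i)" for g :: "nat \<Rightarrow> real"
  proof -
    have "N = r + (N - r)" using assms(1) by simp
    hence "(\<Sum>i=1..N. g i) = (\<Sum>i=1..r + (N - r). g i)" by simp
    also have "\<dots> = (\<Sum>i=1..r. g i) + (\<Sum>i=r+1..r + (N - r). g i)"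
      by (rule sum.ub_add_nat) simp
    finally show ?thesis using \<open>N = r + (N - r)\<close> by simp
  qed
  have e1: "(\<Sum>i=1..r. (lam i - lam r) * (1 - c i)) = (\<Sum>i=1..r. lam i) - lam r * real r - (\<Sum>i=1..r. lam i * c i) + lam r * (\<Sum>i=1..r. c i)"
    by (simp add: sum_subtractf sum.distrib sum_distrib_left left_diff_distrib right_diff_distrib)
  have e2: "(\<Sum>i=r+1..N. (lam r - lam i) * c i) = lam r * (\<Sum>i=r+1..N. c i) - (\<Sum>i=r+1..N. lam i * c i)"
    by (simp add: sum_subtractf sum_distrib_left left_diff_distrib)
  have h: "lam r * (\<Sum>i=1..r. c i) + lam r * (\<Sum>i=r+1..N. c i) = lam r * real r"
    using split[of c] assms(2) by (simp add: distrib_left[symmetric])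
  show ?thesis
    unfolding e1 e2 using split[of "\<lambda>i. lam i * c i"] h
    by simp
qed




definition Cst :: "(nat \<Rightarrow> real) \<Rightarrow> nat \<Rightarrow> (nat \<Rightarrow> real^'n^'n) \<Rightarrow> real" where
  "Cst w m Ps = (1 / real m) * (\<Sum>i=1..m. 1/2 * (w (rank (Ps i)))\<^sup>2 * fip (Ps i) (Ps i))"

lemma sigma_formula:
  fixes Ps :: "nat \<Rightarrow> real^'n^'n"
  assumes m: "m \<ge> 1" and op: "orth_proj Q"
  shows "sigma_w2 w m Ps Q = Cst w m Ps - w (rank Q) * fip (Pbar_w w m Ps) Q
           + 1/2 * (w (rank Q))\<^sup>2 * real (rank Q)"
proof -
  let ?b = "w (rank Q)"
  let ?a = "\<lambda>i. w (rank (Ps i))"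
  have D: "Dw2 w (Ps i) Q = 1/2 * (?a i)\<^sup>2 * fip (Ps i) (Ps i) - ?a i * ?b * fip (Ps i) Q
            + 1/2 * ?b\<^sup>2 * real (rank Q)" for i
    unfolding Dw2_def frob_expand fip_self_op[OF op] by (simp add: algebra_simps)
  have P: "fip (Pbar_w w m Ps) Q = (1 / real m) * (\<Sum>i=1..m. ?a i * fip (Ps i) Q)"
    unfolding Pbar_w_def fip_scale_left fip_sum_left by simp
  have "sigma_w2 w m Ps Q = (1 / real m) * ((\<Sum>i=1..m. 1/2 * (?a i)\<^sup>2 * fip (Ps i) (Ps i))
        - ?b * (\<Sum>i=1..m. ?a i * fip (Ps i) Q) + real m * (1/2 * ?b\<^sup>2 * real (rank Q)))"
    unfolding sigma_w2_def D by (simp add: sum.distrib sum_subtractf sum_distrib_left mult_ac)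
  also have "\<dots> = Cst w m Ps - ?b * fip (Pbar_w w m Ps) Q + 1/2 * ?b\<^sup>2 * real (rank Q)"
    unfolding Cst_def P using m by (simp add: field_simps)
  finally show ?thesis .
qed

definition Pk :: "(nat \<Rightarrow> real^'n) \<Rightarrow> nat \<Rightarrow> real^'n^'n" where
  "Pk u j = (\<Sum>i=1..j. outer (u i) (u i))"

lemma Pk_mulv: "Pk u j *v x = (\<Sum>i=1..j. (u i \<bullet> x) *\<^sub>R u i)"
  unfolding Pk_def sum_mulv outer_mulv ..

lemma Pk_u:
  fixes u :: "nat \<Rightarrow> real^'n"
  assumes orth: "\<And>i j. i \<in> {1..N} \<Longrightarrow> j \<in> {1..N} \<Longrightarrow> u i \<bullet> u j = (if i = j then 1 else 0)"
    and j: "j \<le> N" and l: "l \<in> {1..N}"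
  shows "Pk u j *v u l = (if l \<le> j then u l else 0)"
proof -
  have "Pk u j *v u l = (\<Sum>i=1..j. if i = l then u l else 0)"
    unfolding Pk_mulv using orth j l by (intro sum.cong refl) auto
  also have "\<dots> = (if l \<le> j then u l else 0)"
    using l by (simp add: sum.delta)
  finally show ?thesis .
qed

lemma Pk_op:
  fixes u :: "nat \<Rightarrow> real^'n"
  assumes orth: "\<And>i j. i \<in> {1..N} \<Longrightarrow> j \<in> {1..N} \<Longrightarrow> u i \<bullet> u j = (if i = j then 1 else 0)"
    and j: "j \<le> N"
  shows "orth_proj (Pk u j)"
  unfolding orth_proj_def
proof
  show "transpose (Pk u j) = Pk u j"
    by (simp add: Pk_def transpose_def outer_def vec_eq_iff sum_component mult.commute)
  show "Pk u j ** Pk u j = Pk u j"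
  proof (subst matrix_eq, intro allI)
    fix x
    have "Pk u j *v (Pk u j *v x) = Pk u j *v x"
    proof -
      have "u i \<bullet> (Pk u j *v x) = u i \<bullet> x" if "i \<in> {1..j}" for i
      proof -
        have "u i \<bullet> (Pk u j *v x) = (\<Sum>l=1..j. (u l \<bullet> x) * (u i \<bullet> u l))"
          unfolding Pk_mulv by (simp add: inner_sum_right)
        also have "\<dots> = (\<Sum>l=1..j. if l = i then u i \<bullet> x else 0)"
          using orth that j by (intro sum.cong refl) auto
        also have "\<dots> = u i \<bullet> x" using that by (simp add: sum.delta)
        finally show ?thesis .
      qed
      thus ?thesis unfolding Pk_mulv[of u j "Pk u j *v x"] by (simp add: Pk_mulv)
    qed
    thus "(Pk u j ** Pk u j) *v x = Pk u j *v x" by (simp add: matrix_vector_mul_assoc[symmetric])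
  qed
qed

lemma trace_u:
  fixes u :: "nat \<Rightarrow> real^'n"
  assumes orth: "\<And>i j. i \<in> {1..CARD('n)} \<Longrightarrow> j \<in> {1..CARD('n)} \<Longrightarrow> u i \<bullet> u j = (if i = j then 1 else 0)"
    and op: "orth_proj Q"
  shows "(\<Sum>i=1..CARD('n). u i \<bullet> (Q *v u i)) = real (rank Q)"
proof -
  have sp: "span (u ` {1..CARD('n)}) = UNIV"
    by (rule orthonormal_span_UNIV) (use orth in auto)
  have "(\<Sum>j\<in>UNIV. Q $ j $ j) = (\<Sum>i=1..CARD('n). u i \<bullet> (Q *v u i))"
    by (rule trace_gen) (use orth op sp in \<open>auto simp: orth_proj_def\<close>)
  thus ?thesis using trace_rank[OF op] by simp
qed

lemma fip_decomp:
  assumes "S = (\<Sum>i=1..N. lam i *\<^sub>R outer (u i) (u i))"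
  shows "fip S Q = (\<Sum>i=1..N. lam i * (u i \<bullet> (Q *v u i)))"
  unfolding assms fip_sum_left fip_scale_left fip_outer ..

lemma sum_ind_le:
  fixes j N :: nat
  assumes "j \<le> N"
  shows "(\<Sum>i=1..N. f i * (if i \<le> j then 1 else 0)) = (\<Sum>i=1..j. (f i :: real))"
proof -
  have "(\<Sum>i=1..N. f i * (if i \<le> j then 1 else 0)) = (\<Sum>i=1..N. if i \<le> j then f i else 0)"
    by (intro sum.cong refl) simp
  also have "\<dots> = (\<Sum>i\<in>{i\<in>{1..N}. i \<le> j}. f i)"
    by (rule sum.inter_filter[symmetric]) simp
  also have "{i\<in>{1..N}. i \<le> j} = {1..j}" using assms by auto
  finally show ?thesis .
qed

lemma rank_Pk:
  fixes u :: "nat \<Rightarrow> real^'n"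
  assumes orth: "\<And>i j. i \<in> {1..CARD('n)} \<Longrightarrow> j \<in> {1..CARD('n)} \<Longrightarrow> u i \<bullet> u j = (if i = j then 1 else 0)"
    and j: "j \<le> CARD('n)"
  shows "rank (Pk u j) = j"
proof -
  have "real (rank (Pk u j)) = (\<Sum>i=1..CARD('n). u i \<bullet> (Pk u j *v u i))"
    using trace_u[OF orth Pk_op[OF orth j]] by simp
  also have "\<dots> = (\<Sum>i=1..CARD('n). 1 * (if i \<le> j then 1 else 0))"
    using Pk_u[OF orth j] orth by (intro sum.cong refl) auto
  also have "\<dots> = real j" using sum_ind_le[OF j, of "\<lambda>_. 1"] by simp
  finally show ?thesis by simp
qed

lemma T_Pk:
  fixes u :: "nat \<Rightarrow> real^'n"
  assumes orth: "\<And>i j. i \<in> {1..CARD('n)} \<Longrightarrow> j \<in> {1..CARD('n)} \<Longrightarrow> u i \<bullet> u j = (if i = j then 1 else 0)"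
    and j: "j \<le> CARD('n)"
    and S: "S = (\<Sum>i=1..CARD('n). lam i *\<^sub>R outer (u i) (u i))"
  shows "fip S (Pk u j) = (\<Sum>i=1..j. lam i)"
proof -
  have "fip S (Pk u j) = (\<Sum>i=1..CARD('n). lam i * (u i \<bullet> (Pk u j *v u i)))"
    by (rule fip_decomp[OF S])
  also have "\<dots> = (\<Sum>i=1..CARD('n). lam i * (if i \<le> j then 1 else 0))"
    using Pk_u[OF orth j] orth by (intro sum.cong refl) auto
  also have "\<dots> = (\<Sum>i=1..j. lam i)" by (rule sum_ind_le[OF j])
  finally show ?thesis .
qed

lemma KF:
  fixes u :: "nat \<Rightarrow> real^'n" and lam :: "nat \<Rightarrow> real"
  assumes orth: "\<And>i j. i \<in> {1..CARD('n)} \<Longrightarrow> j \<in> {1..CARD('n)} \<Longrightarrow> u i \<bullet> u j = (if i = j then 1 else 0)"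
    and sorted: "\<And>i j. 1 \<le> i \<Longrightarrow> i \<le> j \<Longrightarrow> j \<le> CARD('n) \<Longrightarrow> lam j \<le> lam i"
    and op: "orth_proj Q"
  shows "(\<Sum>i=1..CARD('n). lam i * (u i \<bullet> (Q *v u i))) \<le> (\<Sum>i=1..rank Q. lam i)"
    and "(\<Sum>i=1..CARD('n). lam i * (u i \<bullet> (Q *v u i))) = (\<Sum>i=1..rank Q. lam i) \<Longrightarrow> rank Q \<ge> 1 \<Longrightarrow>
         i \<in> {1..CARD('n)} \<Longrightarrow> (lam i > lam (rank Q) \<longrightarrow> Q *v u i = u i) \<and> (lam i < lam (rank Q) \<longrightarrow> Q *v u i = 0)"
proof -
  define N where "N = CARD('n)"
  define r where "r = rank Q"
  define c where "c i = u i \<bullet> (Q *v u i)" for i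
  have rN: "r \<le> N" unfolding r_def N_def using rank_bound[of Q] by simp
  have c0: "c i \<ge> 0" for i unfolding c_def op_quad(1)[OF op] by simp
  have c1: "1 - c i = (u i - Q *v u i) \<bullet> (u i - Q *v u i)" if "i \<in> {1..N}" for i
    using op_quad(2)[OF op, of "u i"] orth[of i i] that unfolding c_def N_def by simp
  have c1': "c i \<le> 1" if "i \<in> {1..N}" for i using c1[OF that] by (smt (verit) inner_ge_zero)
  have sc: "(\<Sum>i=1..N. c i) = real r" unfolding c_def N_def r_def by (rule trace_u[OF orth op])
  have main: "(\<Sum>i=1..N. lam i * c i) \<le> (\<Sum>i=1..r. lam i) \<and>
      ((\<Sum>i=1..N. lam i * c i) = (\<Sum>i=1..r. lam i) \<longrightarrow> r \<ge> 1 \<longrightarrow> i \<in> {1..N} \<longrightarrow>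
         (lam i > lam r \<longrightarrow> c i = 1) \<and> (lam i < lam r \<longrightarrow> c i = 0))"
  proof (cases "r = 0")
    case True
    have "\<forall>i\<in>{1..N}. c i = 0"
      using sc True c0 by (subst sum_nonneg_eq_0_iff[symmetric]) auto
    hence "(\<Sum>i=1..N. lam i * c i) = 0" by simp
    thus ?thesis using True by simp
  next
    case False
    let ?A = "(\<Sum>i=1..r. (lam i - lam r) * (1 - c i))"
    let ?B = "(\<Sum>i=r+1..N. (lam r - lam i) * c i)"
    have id: "(\<Sum>i=1..r. lam i) - (\<Sum>i=1..N. lam i * c i) = ?A + ?B"
      by (rule kf_identity[OF rN sc])
    have tA: "(lam i - lam r) * (1 - c i) \<ge> 0" if "i \<in> {1..r}" for i
      using that sorted[of i r] rN c1'[of i] unfolding N_def by (intro mult_nonneg_nonneg) auto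
    have tB: "(lam r - lam i) * c i \<ge> 0" if "i \<in> {r+1..N}" for i
      using that sorted[of r i] False c0[of i] unfolding N_def by (intro mult_nonneg_nonneg) auto
    have A0: "?A \<ge> 0" using tA by (intro sum_nonneg) auto
    have B0: "?B \<ge> 0" using tB by (intro sum_nonneg) auto
    have eq: "(lam i > lam r \<longrightarrow> c i = 1) \<and> (lam i < lam r \<longrightarrow> c i = 0)"
      if E: "(\<Sum>i=1..N. lam i * c i) = (\<Sum>i=1..r. lam i)" and i: "i \<in> {1..N}" for i
    proof -
      have a0: "?A = 0" and b0: "?B = 0" using id E A0 B0 by linarith+
      have zA: "\<forall>i\<in>{1..r}. (lam i - lam r) * (1 - c i) = 0"
        using a0 sum_nonneg_eq_0_iff[of "{1..r}" "\<lambda>i. (lam i - lam r) * (1 - c i)"] tA by blast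
      have zB: "\<forall>i\<in>{r+1..N}. (lam r - lam i) * c i = 0"
        using b0 sum_nonneg_eq_0_iff[of "{r+1..N}" "\<lambda>i. (lam r - lam i) * c i"] tB by blast
      show ?thesis
      proof (intro conjI impI)
        assume "lam i > lam r"
        hence "i \<le> r" using sorted[of r i] i False unfolding N_def by (cases "i \<le> r") auto
        hence "i \<in> {1..r}" using i by auto
        hence "(lam i - lam r) * (1 - c i) = 0" using zA by blast
        thus "c i = 1" using \<open>lam i > lam r\<close> by simp
      next
        assume "lam i < lam r"
        hence "i > r" using sorted[of i r] i rN unfolding N_def by (cases "i \<le> r") auto
        hence "i \<in> {r+1..N}" using i by auto
        hence "(lam r - lam i) * c i = 0" using zB by blast
        thus "c i = 0" using \<open>lam i < lam r\<close> by simp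
      qed
    qed
    have le: "(\<Sum>i=1..N. lam i * c i) \<le> (\<Sum>i=1..r. lam i)" using id A0 B0 by linarith
    show ?thesis using le eq by blast
  qed
  show "(\<Sum>i=1..CARD('n). lam i * (u i \<bullet> (Q *v u i))) \<le> (\<Sum>i=1..rank Q. lam i)"
    using main unfolding c_def N_def r_def by simp
  assume E: "(\<Sum>i=1..CARD('n). lam i * (u i \<bullet> (Q *v u i))) = (\<Sum>i=1..rank Q. lam i)"
    and r1: "rank Q \<ge> 1" and i: "i \<in> {1..CARD('n)}"
  have E': "(\<Sum>i=1..N. lam i * c i) = (\<Sum>i=1..r. lam i)"
    using E unfolding c_def N_def r_def by simp
  have cc: "(lam i > lam r \<longrightarrow> c i = 1) \<and> (lam i < lam r \<longrightarrow> c i = 0)"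
    using main E' r1 i unfolding N_def r_def by blast
  show "(lam i > lam (rank Q) \<longrightarrow> Q *v u i = u i) \<and> (lam i < lam (rank Q) \<longrightarrow> Q *v u i = 0)"
  proof (intro conjI impI)
    assume "lam i > lam (rank Q)"
    hence "c i = 1" using cc r_def by simp
    hence "(u i - Q *v u i) \<bullet> (u i - Q *v u i) = 0" using c1[of i] i N_def by simp
    thus "Q *v u i = u i" by simp
  next
    assume "lam i < lam (rank Q)"
    hence "c i = 0" using cc r_def by simp
    hence "(Q *v u i) \<bullet> (Q *v u i) = 0" using op_quad(1)[OF op] c_def by simp
    thus "Q *v u i = 0" by simp
  qed
qed

lemma fip_self_zero:
  assumes "fip A A = 0" shows "A = 0"
proof -
  have "\<forall>i\<in>UNIV. (\<Sum>j\<in>UNIV. A $ i $ j * A $ i $ j) = 0"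
    using assms unfolding fip_def
    by (subst sum_nonneg_eq_0_iff[symmetric]) (auto intro!: sum_nonneg)
  hence "\<forall>i j. A $ i $ j * A $ i $ j = 0"
    by (metis (no_types, lifting) UNIV_I finite sum_nonneg_eq_0_iff zero_le_square)
  thus ?thesis by (simp add: vec_eq_iff)
qed

lemma fw_eq: "f_w w lam j = w j * (\<Sum>i=1..j. lam i) - 1/2 * (w j)\<^sup>2 * real j"
  unfolding f_w_def by (cases "j = 0") auto

lemma init_seg:
  fixes A :: "nat set"
  assumes sub: "A \<subseteq> {1..N}" and dc: "\<And>i j. i \<in> A \<Longrightarrow> 1 \<le> j \<Longrightarrow> j \<le> i \<Longrightarrow> j \<in> A"
  shows "A = {1..card A}"
proof (cases "A = {}")
  case True thus ?thesis by simp
next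
  case False
  have fin: "finite A" using sub finite_subset by blast
  define M where "M = Max A"
  have M: "M \<in> A" "\<And>x. x \<in> A \<Longrightarrow> x \<le> M" using fin False unfolding M_def by auto
  have "A = {1..M}"
  proof
    show "A \<subseteq> {1..M}" using M(2) sub by auto
    show "{1..M} \<subseteq> A" using dc[OF M(1)] by auto
  qed
  thus ?thesis by simp
qed

lemma mat_eq_on_span:
  fixes A A' :: "real^'n^'n"
  assumes "\<And>x. x \<in> B \<Longrightarrow> A *v x = A' *v x" and "span B = UNIV"
  shows "A = A'"
proof -
  have "A *v x = A' *v x" for x
    by (rule linear_eq_on_span[OF matrix_vector_mul_linear matrix_vector_mul_linear, of B])
       (use assms in auto)
  thus ?thesis by (simp add: matrix_eq)
qed

lemma decomp_mulv:
  fixes v :: "nat \<Rightarrow> real^'n"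
  assumes orth: "\<And>i j. i \<in> {1..N} \<Longrightarrow> j \<in> {1..N} \<Longrightarrow> v i \<bullet> v j = (if i = j then 1 else 0)"
    and j: "j \<in> {1..N}"
  shows "(\<Sum>i=1..N. lam i *\<^sub>R outer (v i) (v i)) *v v j = lam j *\<^sub>R v j"
proof -
  have "(\<Sum>i=1..N. lam i *\<^sub>R outer (v i) (v i)) *v v j = (\<Sum>i=1..N. if i = j then lam j *\<^sub>R v j else 0)"
    unfolding sum_mulv scale_mulv outer_mulv using orth j by (intro sum.cong refl) auto
  also have "\<dots> = lam j *\<^sub>R v j" using j by (simp add: sum.delta)
  finally show ?thesis .
qed

lemma construct:
  fixes u :: "nat \<Rightarrow> real^'n" and lam :: "nat \<Rightarrow> real" and Q S :: "real^'n^'n"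
  assumes orth: "\<And>i j. i \<in> {1..CARD('n)} \<Longrightarrow> j \<in> {1..CARD('n)} \<Longrightarrow> u i \<bullet> u j = (if i = j then 1 else 0)"
    and sorted: "\<And>i j. 1 \<le> i \<Longrightarrow> i \<le> j \<Longrightarrow> j \<le> CARD('n) \<Longrightarrow> lam j \<le> lam i"
    and S: "S = (\<Sum>i=1..CARD('n). lam i *\<^sub>R outer (u i) (u i))"
    and op: "orth_proj Q" and r1: "rank Q \<ge> 1"
    and hQ: "\<And>i. i \<in> {1..CARD('n)} \<Longrightarrow> (lam i > lam (rank Q) \<longrightarrow> Q *v u i = u i) \<and> (lam i < lam (rank Q) \<longrightarrow> Q *v u i = 0)"
  shows "\<exists>v :: nat \<Rightarrow> real^'n.
            (\<forall>i\<in>{1..CARD('n)}. \<forall>j\<in>{1..CARD('n)}. v i \<bullet> v j = (if i = j then 1 else 0)) \<and>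
            S = (\<Sum>i=1..CARD('n). lam i *\<^sub>R outer (v i) (v i)) \<and>
            Q = (\<Sum>i=1..rank Q. outer (v i) (v i))"
proof -
  define N where "N = CARD('n)"
  define r where "r = rank Q"
  have rN: "r \<le> N" unfolding r_def N_def using rank_bound[of Q] by simp
  have r1': "1 \<le> r" using r1 r_def by simp
  have orth': "\<And>i j. i \<in> {1..N} \<Longrightarrow> j \<in> {1..N} \<Longrightarrow> u i \<bullet> u j = (if i = j then 1 else 0)"
    using orth N_def by simp
  have spU: "span (u ` {1..N}) = UNIV"
    by (rule orthonormal_span_UNIV) (use orth N_def in auto)
  define A where "A = {i\<in>{1..N}. lam i > lam r}"
  define B where "B = {i\<in>{1..N}. lam i \<ge> lam r}"
  define a where "a = card A"
  define b where "b = card B"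
  have Aeq: "A = {1..a}" unfolding a_def
    by (rule init_seg[of _ N]) (use sorted N_def in \<open>auto simp: A_def intro: less_le_trans\<close>)
  have Beq: "B = {1..b}" unfolding b_def
    by (rule init_seg[of _ N]) (use sorted N_def in \<open>auto simp: B_def intro: order_trans\<close>)
  have ar: "a < r"
  proof -
    have "r \<notin> A" unfolding A_def by simp
    thus ?thesis using Aeq r1' by auto
  qed
  have rb: "r \<le> b"
  proof -
    have "r \<in> B" unfolding B_def using r1' rN by simp
    thus ?thesis using Beq by auto
  qed
  have bN: "b \<le> N" using Beq B_def by (metis atLeastAtMost_iff mem_Collect_eq order_refl rb r1' order_trans
        le_SucE nat_le_linear not_less_eq_eq)
  have gt_iff: "lam i > lam r \<longleftrightarrow> i \<le> a" if "i \<in> {1..N}" for i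
    using that Aeq unfolding A_def by (auto simp: set_eq_iff)
  have ge_iff: "lam i \<ge> lam r \<longleftrightarrow> i \<le> b" if "i \<in> {1..N}" for i
    using that Beq unfolding B_def by (auto simp: set_eq_iff)
  have Qlo: "Q *v u i = u i" if "i \<in> {1..a}" for i
    using hQ[of i] gt_iff[of i] that ar rN r_def N_def by auto
  have Qhi: "Q *v u i = 0" if "i \<in> {b+1..N}" for i
    using hQ[of i] ge_iff[of i] that r_def N_def by auto
  have lam_mid: "lam i = lam r" if "i \<in> {a+1..b}" for i
    using gt_iff[of i] ge_iff[of i] that bN by auto
  have outside: "i \<le> a \<or> b < i" if "i \<in> {1..N}" "i \<notin> {a+1..b}" for i
    using that by auto
  define E where "E = span (u ` {a+1..b})"
  have subE: "subspace E" unfolding E_def by simp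
  have par: "x = (\<Sum>i=1..N. (x \<bullet> u i) *\<^sub>R u i)" for x
    by (rule expansion) (use orth' spU in auto)
  have Su: "S *v u j = lam j *\<^sub>R u j" if "j \<in> {1..N}" for j
    unfolding S N_def[symmetric] by (rule decomp_mulv[OF orth' that])
  have QmidE: "Q *v u j \<in> E" if j: "j \<in> {a+1..b}" for j
  proof -
    have jN: "j \<in> {1..N}" using j bN by auto
    have z: "((Q *v u j) \<bullet> u i) *\<^sub>R u i = 0" if "i \<in> {1..N} - {a+1..b}" for i
    proof -
      have iN: "i \<in> {1..N}" and ij: "i \<noteq> j" using that j by auto
      have "(Q *v u j) \<bullet> u i = u j \<bullet> (Q *v u i)" by (rule op_sym[OF op])
      also have "\<dots> = 0"
      proof (cases "i \<le> a")
        case True thus ?thesis using Qlo[of i] iN orth'[OF jN iN] ij by simp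
      next
        case False
        hence "i \<in> {b+1..N}" using outside[of i] that by auto
        thus ?thesis using Qhi[of i] by simp
      qed
      finally show ?thesis by simp
    qed
    have "Q *v u j = (\<Sum>i=1..N. ((Q *v u j) \<bullet> u i) *\<^sub>R u i)" by (rule par)
    also have "\<dots> = (\<Sum>i=a+1..b. ((Q *v u j) \<bullet> u i) *\<^sub>R u i)"
      by (rule sum.mono_neutral_right) (use z bN in auto)
    also have "\<dots> \<in> E" unfolding E_def by (intro span_sum span_scale span_base) auto
    finally show ?thesis .
  qed
  have QE: "Q *v x \<in> E" if "x \<in> E" for x
  proof -
    have "Q *v x \<in> (*v) Q ` span (u ` {a+1..b})" using that E_def by auto
    also have "\<dots> = span ((*v) Q ` u ` {a+1..b})"
      by (rule linear_span_image[OF matrix_vector_mul_linear, symmetric])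
    also have "\<dots> \<subseteq> E" using QmidE subE by (intro span_minimal) auto
    finally show ?thesis .
  qed
  have SE: "S *v x = lam r *\<^sub>R x" if "x \<in> E" for x
  proof -
    have "S *v x = (lam r *\<^sub>R mat 1) *v x"
    proof (rule linear_eq_on_span[OF matrix_vector_mul_linear matrix_vector_mul_linear])
      show "x \<in> span (u ` {a+1..b})" using that E_def by simp
      fix y assume "y \<in> u ` {a+1..b}"
      then obtain j where j: "j \<in> {a+1..b}" "y = u j" by auto
      have "j \<in> {1..N}" using j bN by auto
      thus "S *v y = (lam r *\<^sub>R mat 1) *v y" using Su lam_mid[OF j(1)] j(2) by (simp add: scale_mulv)
    qed
    thus ?thesis by (simp add: scale_mulv)
  qed
  have perpE: "x \<bullet> u i = 0" if "x \<in> E" "i \<in> {1..N}" "i \<notin> {a+1..b}" for x i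
  proof -
    have "orthogonal (u i) x"
    proof (rule orthogonal_to_span)
      show "x \<in> span (u ` {a+1..b})" using that E_def by simp
      fix y assume "y \<in> u ` {a+1..b}"
      then obtain j where j: "j \<in> {a+1..b}" "y = u j" by auto
      have "j \<in> {1..N}" using j bN by auto
      thus "orthogonal (u i) y" using orth'[OF that(2) \<open>j \<in> {1..N}\<close>] j that(3)
        by (auto simp: orthogonal_def)
    qed
    thus ?thesis by (simp add: orthogonal_def inner_commute)
  qed
  define R where "R = (\<lambda>x. Q *v x) ` E"
  define K where "K = (\<lambda>x. (mat 1 - Q) *v x) ` E"
  have IQ: "(mat 1 - Q) *v x = x - Q *v x" for x :: "real^'n"
    by (simp add: matrix_vector_mult_diff_rdistrib)
  have subR: "subspace R" unfolding R_def by (rule linear_subspace_image[OF matrix_vector_mul_linear subE])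
  have subK: "subspace K" unfolding K_def by (rule linear_subspace_image[OF matrix_vector_mul_linear subE])
  obtain BR where BR: "BR \<subseteq> R" "pairwise orthogonal BR" "\<And>x. x \<in> BR \<Longrightarrow> norm x = 1"
    "independent BR" "card BR = dim R" "span BR = R"
    using orthonormal_basis_subspace[OF subR] by blast
  obtain BK where BK: "BK \<subseteq> K" "pairwise orthogonal BK" "\<And>x. x \<in> BK \<Longrightarrow> norm x = 1"
    "independent BK" "card BK = dim K" "span BK = K"
    using orthonormal_basis_subspace[OF subK] by blast
  have BR_prop: "Q *v x = x \<and> x \<in> E" if x: "x \<in> BR" for x
  proof -
    obtain y where y: "y \<in> E" "x = Q *v y" using BR(1) x R_def by auto
    thus ?thesis using op_idem[OF op] QE by auto
  qed
  have BK_prop: "Q *v x = 0 \<and> x \<in> E" if x: "x \<in> BK" for x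
  proof -
    obtain y where y: "y \<in> E" "x = y - Q *v y" using BK(1) x K_def IQ by auto
    have "Q *v x = 0" using y op_idem[OF op, of y] by (simp add: matrix_vector_mult_diff_distrib)
    moreover have "x \<in> E" using y QE subE by (simp add: subspace_diff)
    ultimately show ?thesis by simp
  qed
  define Ulo where "Ulo = u ` {1..a}"
  define Uhi where "Uhi = u ` {b+1..N}"
  define W where "W = Ulo \<union> BR \<union> BK \<union> Uhi"
  have U_def': "x \<in> Ulo \<union> Uhi \<longleftrightarrow> (\<exists>i\<in>{1..N}. i \<notin> {a+1..b} \<and> x = u i)" for x
  proof -
    have "{1..a} \<union> {b+1..N} = {i\<in>{1..N}. i \<notin> {a+1..b}}" using bN ar rN rb by auto
    hence "Ulo \<union> Uhi = u ` {i\<in>{1..N}. i \<notin> {a+1..b}}" unfolding Ulo_def Uhi_def image_Un[symmetric] by simp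
    thus ?thesis by auto
  qed
  have o1: "x \<bullet> y = (if x = y then 1 else 0)" if "x \<in> Ulo \<union> Uhi" "y \<in> Ulo \<union> Uhi" for x y
    using that orth' unfolding U_def' by auto
  have o2: "x \<bullet> y = 0" if "x \<in> Ulo \<union> Uhi" "y \<in> BR \<union> BK" for x y
  proof -
    have "y \<in> E" using that BR_prop BK_prop by auto
    thus ?thesis using that(1) perpE unfolding U_def' by (auto simp: inner_commute)
  qed
  have o3: "x \<bullet> y = 0" if "x \<in> BR" "y \<in> BK" for x y
    using op_sym[OF op, of x y] BR_prop[OF that(1)] BK_prop[OF that(2)] by simp
  have o4: "x \<bullet> y = (if x = y then 1 else 0)" if "x \<in> BR" "y \<in> BR" for x y
    using that BR(2,3) by (auto simp: pairwise_def orthogonal_def norm_eq_1)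
  have o5: "x \<bullet> y = (if x = y then 1 else 0)" if "x \<in> BK" "y \<in> BK" for x y
    using that BK(2,3) by (auto simp: pairwise_def orthogonal_def norm_eq_1)
  have nrm: "x \<bullet> x = 1" if "x \<in> W" for x
    using that o1 o4 o5 unfolding W_def by auto
  have W_on: "x \<bullet> y = (if x = y then 1 else 0)" if "x \<in> W" "y \<in> W" for x y
  proof (cases "x = y")
    case True thus ?thesis using nrm that by simp
  next
    case False
    have "x \<bullet> y = 0"
      using that False o1 o2 o3 o4 o5 o2[of y x] o3[of y x] unfolding W_def
      by (auto simp: inner_commute)
    thus ?thesis using False by simp
  qed
  have spW: "span W = UNIV"
  proof -
    have "u i \<in> span W" if i: "i \<in> {1..N}" for i
    proof (cases "i \<in> {a+1..b}")
      case False
      hence "u i \<in> Ulo \<union> Uhi" using i unfolding U_def' by auto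
      hence "u i \<in> W" unfolding W_def by auto
      thus ?thesis by (rule span_base)
    next
      case True
      have ue: "u i \<in> E" unfolding E_def using True by (intro span_base) auto
      have "Q *v u i \<in> R" unfolding R_def using ue by auto
      hence 1: "Q *v u i \<in> span W" using BR(6) span_mono[of BR W] unfolding W_def by auto
      have "(mat 1 - Q) *v u i \<in> K" unfolding K_def using ue by auto
      hence 2: "u i - Q *v u i \<in> span W" using BK(6) span_mono[of BK W] IQ unfolding W_def by auto
      have "u i = Q *v u i + (u i - Q *v u i)" by simp
      also have "\<dots> \<in> span W" using 1 2 by (rule span_add)
      finally show ?thesis .
    qed
    hence "span (u ` {1..N}) \<subseteq> span W" by (intro span_minimal) auto
    thus ?thesis using spU by auto
  qed
  have indW: "independent W"
  proof (rule pairwise_orthogonal_independent)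
    show "pairwise orthogonal W" using W_on by (auto simp: pairwise_def orthogonal_def)
    show "0 \<notin> W" using nrm by force
  qed
  have finW: "finite W" using indW independent_imp_finite by blast
  have cardW: "card W = N"
  proof -
    have "card W = dim W" using dim_eq_card_independent[OF indW] by simp
    also have "\<dots> = dim (span W)" by simp
    also have "\<dots> = N" unfolding spW N_def by simp
    finally show ?thesis .
  qed
  have dis: "P1 \<inter> P2 = {}" if "\<And>x y. x \<in> P1 \<Longrightarrow> y \<in> P2 \<Longrightarrow> x \<bullet> y = 0" "P1 \<subseteq> W" for P1 P2
    using that nrm by (metis disjoint_iff subsetD zero_neq_one)
  have d1: "Ulo \<inter> BR = {}" by (rule dis) (use o2 in \<open>auto simp: W_def\<close>)
  have d2: "(Ulo \<union> BR) \<inter> BK = {}" by (rule dis) (use o2 o3 in \<open>auto simp: W_def\<close>)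
  have d3: "(Ulo \<union> BR \<union> BK) \<inter> Uhi = {}"
  proof (rule dis)
    fix x y assume x: "x \<in> Ulo \<union> BR \<union> BK" and y: "y \<in> Uhi"
    show "x \<bullet> y = 0"
    proof (cases "x \<in> Ulo")
      case True
      then obtain i where i: "i \<in> {1..a}" "x = u i" unfolding Ulo_def by auto
      obtain j where j: "j \<in> {b+1..N}" "y = u j" using y unfolding Uhi_def by auto
      show ?thesis using orth'[of i j] i j ar rN rb by auto
    next
      case False
      thus ?thesis using x y o2[of y x] by (auto simp: inner_commute)
    qed
  qed (auto simp: W_def)
  have injU: "inj_on u {1..N}" by (rule orthonormal_inj) (use orth' in blast)
  have cUlo: "card Ulo = a" unfolding Ulo_def
    by (subst card_image) (use injU inj_on_subset[of u "{1..N}" "{1..a}"] ar rN in auto)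
  have cUhi: "card Uhi = N - b" unfolding Uhi_def
    by (subst card_image) (use injU inj_on_subset[of u "{1..N}" "{b+1..N}"] in auto)
  have finBR: "finite BR" and finBK: "finite BK" and finUlo: "finite Ulo" and finUhi: "finite Uhi"
    using finW unfolding W_def by auto
  have sumW: "(\<Sum>x\<in>W. g x) = (\<Sum>x\<in>Ulo. g x) + (\<Sum>x\<in>BR. g x) + (\<Sum>x\<in>BK. g x) + (\<Sum>x\<in>Uhi. g x)"
    for g :: "real^'n \<Rightarrow> real"
    unfolding W_def using d1 d2 d3 finBR finBK finUlo finUhi
    by (simp add: sum.union_disjoint)
  have "real N = real (card W)" using cardW by simp
  also have "\<dots> = (\<Sum>x\<in>W. 1)" by simp
  also have "\<dots> = real a + real (card BR) + real (card BK) + real (N - b)"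
    unfolding sumW using cUlo cUhi by simp
  finally have cN: "real N = real a + real (card BR) + real (card BK) + real (N - b)" .
  have "real r = (\<Sum>x\<in>W. id x \<bullet> (Q *v id x))"
    using trace_gen[OF finW, of id Q] W_on op spW trace_rank[OF op] r_def
    by (auto simp: orth_proj_def)
  also have "\<dots> = real a + real (card BR)"
  proof -
    have "(\<Sum>x\<in>Ulo. id x \<bullet> (Q *v id x)) = (\<Sum>x\<in>Ulo. 1)"
    proof (intro sum.cong refl)
      fix x assume "x \<in> Ulo"
      then obtain i where i: "i \<in> {1..a}" "x = u i" unfolding Ulo_def by auto
      thus "id x \<bullet> (Q *v id x) = 1" using Qlo[OF i(1)] orth'[of i i] ar rN by auto
    qed
    moreover have "(\<Sum>x\<in>BR. id x \<bullet> (Q *v id x)) = (\<Sum>x\<in>BR. 1)"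
      using BR_prop nrm unfolding W_def by (intro sum.cong refl) auto
    moreover have "(\<Sum>x\<in>BK. id x \<bullet> (Q *v id x)) = 0"
      using BK_prop by (intro sum.neutral) auto
    moreover have "(\<Sum>x\<in>Uhi. id x \<bullet> (Q *v id x)) = 0"
      using Qhi unfolding Uhi_def by (intro sum.neutral) auto
    ultimately show ?thesis unfolding sumW using cUlo by simp
  qed
  finally have cBR: "card BR = r - a" using ar by linarith
  have cBK: "card BK = b - r" using cN cBR ar rb bN by linarith
  obtain hR where hR: "bij_betw hR {0..<card BR} BR" using ex_bij_betw_nat_finite[OF finBR] by blast
  obtain hK where hK: "bij_betw hK {0..<card BK} BK" using ex_bij_betw_nat_finite[OF finBK] by blast
  define v where "v i = (if i \<le> a then u i else if i \<le> r then hR (i - a - 1)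
                          else if i \<le> b then hK (i - r - 1) else u i)" for i
  have vW: "v ` {1..N} = W"
  proof
    show "v ` {1..N} \<subseteq> W"
    proof
      fix x assume "x \<in> v ` {1..N}"
      then obtain i where i: "i \<in> {1..N}" "x = v i" by auto
      consider "i \<le> a" | "a < i" "i \<le> r" | "r < i" "i \<le> b" | "b < i" by linarith
      thus "x \<in> W"
      proof cases
        case 1 thus ?thesis using i unfolding v_def W_def Ulo_def by auto
      next
        case 2
        have "i - a - 1 \<in> {0..<card BR}" using 2 cBR by auto
        hence "hR (i - a - 1) \<in> BR" using hR by (meson bij_betwE)
        thus ?thesis using i 2 unfolding v_def W_def by auto
      next
        case 3
        have "i - r - 1 \<in> {0..<card BK}" using 3 cBK by auto
        hence "hK (i - r - 1) \<in> BK" using hK by (meson bij_betwE)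
        thus ?thesis using i 3 ar unfolding v_def W_def by auto
      next
        case 4 thus ?thesis using i ar rb unfolding v_def W_def Uhi_def by auto
      qed
    qed
    show "W \<subseteq> v ` {1..N}"
    proof
      fix x assume "x \<in> W"
      hence "x \<in> Ulo \<or> x \<in> BR \<or> x \<in> BK \<or> x \<in> Uhi" unfolding W_def by auto
      thus "x \<in> v ` {1..N}"
      proof (elim disjE)
        assume "x \<in> Ulo"
        then obtain i where i: "i \<in> {1..a}" "x = u i" unfolding Ulo_def by auto
        hence "v i = x" unfolding v_def by simp
        thus ?thesis using i ar rN by (intro image_eqI[of _ _ i]) auto
      next
        assume "x \<in> BR"
        then obtain t where t: "t \<in> {0..<card BR}" "x = hR t" using hR by (metis bij_betw_imp_surj_on imageE)
        have "v (t + a + 1) = x" unfolding v_def using t cBR by auto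
        thus ?thesis using t cBR ar rN by (intro image_eqI[of _ _ "t + a + 1"]) auto
      next
        assume "x \<in> BK"
        then obtain t where t: "t \<in> {0..<card BK}" "x = hK t" using hK by (metis bij_betw_imp_surj_on imageE)
        have "v (t + r + 1) = x" unfolding v_def using t cBK ar by auto
        thus ?thesis using t cBK rb bN by (intro image_eqI[of _ _ "t + r + 1"]) auto
      next
        assume "x \<in> Uhi"
        then obtain i where i: "i \<in> {b+1..N}" "x = u i" unfolding Uhi_def by auto
        hence "v i = x" unfolding v_def using ar rb by auto
        thus ?thesis using i by (intro image_eqI[of _ _ i]) auto
      qed
    qed
  qed
  have cv: "card (v ` {1..N}) = card {1..N}" unfolding vW using cardW by simp
  have injv: "inj_on v {1..N}" by (rule eq_card_imp_inj_on[OF finite_atLeastAtMost cv])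
  have v_on: "v i \<bullet> v j = (if i = j then 1 else 0)" if "i \<in> {1..N}" "j \<in> {1..N}" for i j
  proof -
    have "v i \<in> v ` {1..N}" "v j \<in> v ` {1..N}" using that by blast+
    hence "v i \<in> W" "v j \<in> W" unfolding vW .
    moreover have "v i = v j \<longleftrightarrow> i = j" by (rule inj_on_eq_iff[OF injv that])
    ultimately show ?thesis using W_on[of "v i" "v j"] by simp
  qed
  have spv: "span (v ` {1..N}) = UNIV" unfolding vW by (rule spW)
  have Qv: "Q *v v i = (if i \<le> r then v i else 0)" if i: "i \<in> {1..N}" for i
  proof -
    consider "i \<le> a" | "a < i" "i \<le> r" | "r < i" "i \<le> b" | "b < i" by linarith
    thus ?thesis
    proof cases
      case 1 thus ?thesis using i Qlo[of i] ar unfolding v_def by auto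
    next
      case 2
      have "v i \<in> BR"
      proof -
        have "i - a - 1 \<in> {0..<card BR}" using 2 cBR by auto
        hence "hR (i - a - 1) \<in> BR" using hR by (meson bij_betwE)
        thus ?thesis using 2 unfolding v_def by auto
      qed
      thus ?thesis using BR_prop 2 by auto
    next
      case 3
      have "v i \<in> BK"
      proof -
        have "i - r - 1 \<in> {0..<card BK}" using 3 cBK by auto
        hence "hK (i - r - 1) \<in> BK" using hK by (meson bij_betwE)
        thus ?thesis using 3 ar unfolding v_def by auto
      qed
      thus ?thesis using BK_prop 3 by auto
    next
      case 4 thus ?thesis using i Qhi[of i] ar rb unfolding v_def by auto
    qed
  qed
  have Sv: "S *v v i = lam i *\<^sub>R v i" if i: "i \<in> {1..N}" for i
  proof (cases "i \<in> {a+1..b}")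
    case False
    hence "v i = u i" unfolding v_def using ar rb by auto
    thus ?thesis using Su[OF i] by simp
  next
    case True
    have "v i \<in> BR \<or> v i \<in> BK"
    proof (cases "i \<le> r")
      case True2: True
      have "i - a - 1 \<in> {0..<card BR}" using True True2 cBR by auto
      hence "hR (i - a - 1) \<in> BR" using hR by (meson bij_betwE)
      thus ?thesis using True True2 unfolding v_def by auto
    next
      case False2: False
      have "i - r - 1 \<in> {0..<card BK}" using True False2 cBK by auto
      hence "hK (i - r - 1) \<in> BK" using hK by (meson bij_betwE)
      thus ?thesis using True False2 ar unfolding v_def by auto
    qed
    hence "v i \<in> E" using BR_prop BK_prop by blast
    thus ?thesis using SE lam_mid[OF True] by simp
  qed
  have v_on': "\<forall>i\<in>{1..CARD('n)}. \<forall>j\<in>{1..CARD('n)}. v i \<bullet> v j = (if i = j then 1 else 0)"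
    using v_on N_def by simp
  have S_eq: "S = (\<Sum>i=1..CARD('n). lam i *\<^sub>R outer (v i) (v i))"
  proof (rule mat_eq_on_span[OF _ spv])
    fix x assume "x \<in> v ` {1..N}"
    then obtain j where j: "j \<in> {1..N}" "x = v j" by auto
    have "(\<Sum>i=1..N. lam i *\<^sub>R outer (v i) (v i)) *v v j = lam j *\<^sub>R v j"
      by (rule decomp_mulv[OF v_on j(1)])
    thus "S *v x = (\<Sum>i=1..CARD('n). lam i *\<^sub>R outer (v i) (v i)) *v x"
      using Sv[OF j(1)] j(2) N_def by simp
  qed
  have Q_eq: "Q = (\<Sum>i=1..rank Q. outer (v i) (v i))"
  proof -
    have "Q = Pk v r"
    proof (rule mat_eq_on_span[OF _ spv])
      fix x assume "x \<in> v ` {1..N}"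
      then obtain j where j: "j \<in> {1..N}" "x = v j" by auto
      show "Q *v x = Pk v r *v x" using Pk_u[OF v_on rN j(1)] Qv[OF j(1)] j(2) by simp
    qed
    thus ?thesis unfolding Pk_def r_def .
  qed
  show ?thesis using v_on' S_eq Q_eq by blast
qed

theorem proposition2p2:
  fixes w :: "nat \<Rightarrow> real" and m :: nat and Ps :: "nat \<Rightarrow> real^'n^'n"
    and lam :: "nat \<Rightarrow> real" and u :: "nat \<Rightarrow> real^'n" and Pw :: "real^'n^'n"
  assumes wpos: "\<And>k. k \<le> CARD('n) \<Longrightarrow> w k > 0"
    and m_pos: "m \<ge> 1"
    and projs: "\<And>i. i \<in> {1..m} \<Longrightarrow> orth_proj (Ps i)"
    and lam_sorted: "\<And>i j. 1 \<le> i \<Longrightarrow> i \<le> j \<Longrightarrow> j \<le> CARD('n) \<Longrightarrow> lam j \<le> lam i"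
    and lam_nonneg: "lam (CARD('n)) \<ge> 0"
    and u_orthonormal: "\<And>i j. i \<in> {1..CARD('n)} \<Longrightarrow> j \<in> {1..CARD('n)} \<Longrightarrow>
                          u i \<bullet> u j = (if i = j then 1 else 0)"
    and eig_decomp: "Pbar_w w m Ps = (\<Sum>i=1..CARD('n). lam i *\<^sub>R outer (u i) (u i))"
    and AOP: "is_AOP w m Ps Pw"
  shows "(\<forall>j \<le> CARD('n). f_w w lam j \<le> f_w w lam (rank Pw)) \<and>
         (\<exists>v :: nat \<Rightarrow> real^'n.
            (\<forall>i\<in>{1..CARD('n)}. \<forall>j\<in>{1..CARD('n)}. v i \<bullet> v j = (if i = j then 1 else 0)) \<and>
            Pbar_w w m Ps = (\<Sum>i=1..CARD('n). lam i *\<^sub>R outer (v i) (v i)) \<and>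
            Pw = (if rank Pw > 0 then 1 else 0) *\<^sub>R (\<Sum>i=1..rank Pw. outer (v i) (v i)))"
proof -
  define S where "S = Pbar_w w m Ps"
  define k where "k = rank Pw"
  define T where "T = fip S Pw"
  have opPw: "orth_proj Pw" and minP: "\<And>Q. orth_proj Q \<Longrightarrow> sigma_w2 w m Ps Pw \<le> sigma_w2 w m Ps Q"
    using AOP unfolding is_AOP_def by auto
  have kN: "k \<le> CARD('n)" unfolding k_def using rank_bound[of Pw] by simp
  have wk: "w k > 0" using wpos[OF kN] .
  have sPw: "sigma_w2 w m Ps Pw = Cst w m Ps - w k * T + 1/2 * (w k)\<^sup>2 * real k"
    unfolding T_def S_def k_def by (rule sigma_formula[OF m_pos opPw])
  have sPk: "sigma_w2 w m Ps (Pk u j) = Cst w m Ps - f_w w lam j" if j: "j \<le> CARD('n)" for j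
  proof -
    have "sigma_w2 w m Ps (Pk u j) = Cst w m Ps - w (rank (Pk u j)) * fip (Pbar_w w m Ps) (Pk u j)
           + 1/2 * (w (rank (Pk u j)))\<^sup>2 * real (rank (Pk u j))"
      by (rule sigma_formula[OF m_pos Pk_op[OF u_orthonormal j]])
    also have "\<dots> = Cst w m Ps - w j * (\<Sum>i=1..j. lam i) + 1/2 * (w j)\<^sup>2 * real j"
      using rank_Pk[OF u_orthonormal j] T_Pk[OF u_orthonormal j eig_decomp] by simp
    finally show ?thesis unfolding fw_eq by simp
  qed
  have Tdec: "T = (\<Sum>i=1..CARD('n). lam i * (u i \<bullet> (Pw *v u i)))"
    unfolding T_def S_def by (rule fip_decomp[OF eig_decomp])
  have Tle: "T \<le> (\<Sum>i=1..k. lam i)"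
    unfolding Tdec k_def by (rule KF(1)[OF u_orthonormal lam_sorted opPw])
  have low: "sigma_w2 w m Ps Pw \<ge> Cst w m Ps - f_w w lam k"
  proof -
    have "w k * T \<le> w k * (\<Sum>i=1..k. lam i)" using Tle wk by (simp add: mult_left_mono)
    thus ?thesis unfolding sPw fw_eq by linarith
  qed
  have part1: "\<forall>j \<le> CARD('n). f_w w lam j \<le> f_w w lam k"
  proof (intro allI impI)
    fix j assume "j \<le> CARD('n)"
    have "sigma_w2 w m Ps Pw \<le> sigma_w2 w m Ps (Pk u j)"
      by (rule minP[OF Pk_op[OF u_orthonormal \<open>j \<le> CARD('n)\<close>]])
    thus "f_w w lam j \<le> f_w w lam k"
      using sPk[OF \<open>j \<le> CARD('n)\<close>] low by linarith
  qed
  have "sigma_w2 w m Ps Pw \<le> Cst w m Ps - f_w w lam k"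
    using minP[OF Pk_op[OF u_orthonormal kN]] sPk[OF kN] by linarith
  hence "w k * (\<Sum>i=1..k. lam i) \<le> w k * T" unfolding sPw fw_eq by linarith
  hence "(\<Sum>i=1..k. lam i) \<le> T" using wk by (rule mult_left_le_imp_le)
  hence Teq: "T = (\<Sum>i=1..k. lam i)" using Tle by linarith
  have part2: "\<exists>v :: nat \<Rightarrow> real^'n.
            (\<forall>i\<in>{1..CARD('n)}. \<forall>j\<in>{1..CARD('n)}. v i \<bullet> v j = (if i = j then 1 else 0)) \<and>
            S = (\<Sum>i=1..CARD('n). lam i *\<^sub>R outer (v i) (v i)) \<and>
            Pw = (if k > 0 then 1 else 0) *\<^sub>R (\<Sum>i=1..k. outer (v i) (v i))"
  proof (cases "k = 0")
    case True
    have "fip Pw Pw = 0" using fip_self_op[OF opPw] True k_def by simp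
    hence "Pw = 0" by (rule fip_self_zero)
    have "(\<forall>i\<in>{1..CARD('n)}. \<forall>j\<in>{1..CARD('n)}. u i \<bullet> u j = (if i = j then 1 else 0)) \<and>
            S = (\<Sum>i=1..CARD('n). lam i *\<^sub>R outer (u i) (u i)) \<and>
            Pw = (if k > 0 then 1 else 0) *\<^sub>R (\<Sum>i=1..k. outer (u i) (u i))"
      using u_orthonormal eig_decomp \<open>Pw = 0\<close> True unfolding S_def by simp
    thus ?thesis by blast
  next
    case False
    have r1: "rank Pw \<ge> 1" using False k_def by simp
    have E: "(\<Sum>i=1..CARD('n). lam i * (u i \<bullet> (Pw *v u i))) = (\<Sum>i=1..rank Pw. lam i)"
      using Teq Tdec k_def by simp
    have hQ: "(lam i > lam (rank Pw) \<longrightarrow> Pw *v u i = u i) \<and> (lam i < lam (rank Pw) \<longrightarrow> Pw *v u i = 0)"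
      if i: "i \<in> {1..CARD('n)}" for i
      by (rule KF(2)[OF u_orthonormal lam_sorted opPw E r1 i])
    obtain v where v: "(\<forall>i\<in>{1..CARD('n)}. \<forall>j\<in>{1..CARD('n)}. v i \<bullet> v j = (if i = j then 1 else 0))"
      "Pbar_w w m Ps = (\<Sum>i=1..CARD('n). lam i *\<^sub>R outer (v i) (v i))" "Pw = (\<Sum>i=1..rank Pw. outer (v i) (v i))"
      using construct[OF u_orthonormal lam_sorted eig_decomp opPw r1 hQ] by blast
    have "Pw = (if k > 0 then 1 else 0) *\<^sub>R (\<Sum>i=1..k. outer (v i) (v i))"
      using v(3) False k_def by simp
    thus ?thesis using v(1,2) unfolding S_def by blast
  qed
  show ?thesis using part1 part2 unfolding S_def k_def by blast
qed


end
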